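(* Let $\Sigma$ be a finite set of dependencies and $\mathcal{D}$ a database. (1) For every fact $\alpha$, $\langle\Sigma,\mathcal{D}\rangle$ AR-entails $\alpha$ if and only if $\langle\Sigma,\mathcal{D}\rangle$ IAR-entails $\alpha$. (2) If moreover every dependency of $\Sigma$ is linear, then for every domain-independent first-order sentence $\phi$ (in particular every safe BUCQ), $\langle\Sigma,\mathcal{D}\rangle$ AR-entails $\phi$ if and only if $\langle\Sigma,\mathcal{D}\rangle$ IAR-entails $\phi$.
   Context: A signature is a set of predicate symbols with arities, always containing a special 0-ary predicate $\bot$. A term is a constant or a variable; a (predicate) atom is $p(t_1,\dots,t_n)$; an inequality is $t\neq t'$. A database is a finite set of ground atoms (facts) not containing $\bot$. A conjunction with inequalities is a conjunction of at least one predicate atom or inequality. A CQ is $\exists\vec y\,\gamma$ with $\gamma$ a conjunction with inequalities; it is safe if every variable occurs in a predicate atom; a UCQ is a finite disjunction of CQs; a safe BUCQ is a UCQ without free variables whose CQs are safe. A dependency is a first-order sentence $\forall\vec x\,(\gamma\rightarrow Q)$ where $\gamma$ (the body) is a conjunction with inequalities whose variables are in $\vec x$, each occurring in some predicate atom of $\gamma$, and $Q$ (the head) is a UCQ whose free variables are among $\vec x$ and in which every existentially quantified variable of each disjunct occurs in a predicate atom of that disjunct. A dependency is linear if its body contains exactly one predicate atom. $\mathcal{D}$ is consistent with $\Sigma$ if $\mathcal{D}$ satisfies every dependency of $\Sigma$. A repair of $\langle\Sigma,\mathcal{D}\rangle$ is an inclusion-maximal subset of $\mathcal{D}$ consistent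 with $\Sigma$. $\langle\Sigma,\mathcal{D}\rangle$ AR-entails $\phi$ if $\mathcal{D}'\models\phi$ for every repair $\mathcal{D}'$; it IAR-entails $\phi$ if the intersection of all repairs satisfies $\phi$. *)

theory Defs
  imports Main
begin

datatype ('c, 'v) trm = Cst 'c | Var 'v

text \<open>Predicate symbols of the signature: the special 0-ary predicate Bot, or an ordinary one.\<close>
datatype 'p pred = Bot | Pr 'p

datatype ('p, 'c, 'v) lit = Atm "'p pred" "('c, 'v) trm list" | Neq "('c, 'v) trm" "('c, 'v) trm"

text \<open>A conjunction with inequalities is a (nonempty) list of literals.
  A CQ is a pair (existentially quantified variables, conjunction); a UCQ a list of CQs.
  A dependency is a pair (body, head).\<close>
type_synonym ('p, 'c, 'v) conj = "('p, 'c, 'v) lit list"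
type_synonym ('p, 'c, 'v) cq = "'v list \<times> ('p, 'c, 'v) conj"
type_synonym ('p, 'c, 'v) ucq = "('p, 'c, 'v) cq list"
type_synonym ('p, 'c, 'v) dep = "('p, 'c, 'v) conj \<times> ('p, 'c, 'v) ucq"

text \<open>Facts (ground atoms over ordinary predicates, hence never Bot) and databases.\<close>
type_synonym ('p, 'c) fact = "'p \<times> 'c list"
type_synonym ('p, 'c) db = "('p, 'c) fact set"

fun vars_trm :: "('c, 'v) trm \<Rightarrow> 'v set" where
  "vars_trm (Cst c) = {}"
| "vars_trm (Var v) = {v}"

fun vars_lit :: "('p, 'c, 'v) lit \<Rightarrow> 'v set" where
  "vars_lit (Atm p ts) = (\<Union>t\<in>set ts. vars_trm t)"
| "vars_lit (Neq s t) = vars_trm s \<union> vars_trm t"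

fun is_patom :: "('p, 'c, 'v) lit \<Rightarrow> bool" where
  "is_patom (Atm p ts) = True"
| "is_patom (Neq s t) = False"

definition vars_conj :: "('p, 'c, 'v) conj \<Rightarrow> 'v set" where
  "vars_conj ls = (\<Union>l\<in>set ls. vars_lit l)"

definition pvars_conj :: "('p, 'c, 'v) conj \<Rightarrow> 'v set" where
  "pvars_conj ls = (\<Union>l\<in>{l \<in> set ls. is_patom l}. vars_lit l)"

definition fv_cq :: "('p, 'c, 'v) cq \<Rightarrow> 'v set" where
  "fv_cq q = vars_conj (snd q) - set (fst q)"

fun wf_lit :: "('p \<Rightarrow> nat) \<Rightarrow> ('p, 'c, 'v) lit \<Rightarrow> bool" where
  "wf_lit ar (Atm Bot ts) = (ts = [])"
| "wf_lit ar (Atm (Pr p) ts) = (length ts = ar p)"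
| "wf_lit ar (Neq s t) = True"

definition wf_conj :: "('p \<Rightarrow> nat) \<Rightarrow> ('p, 'c, 'v) conj \<Rightarrow> bool" where
  "wf_conj ar ls = (ls \<noteq> [] \<and> (\<forall>l\<in>set ls. wf_lit ar l))"

text \<open>CQ whose existential variables each occur in a predicate atom (as required in dependency heads).\<close>
definition wf_cq :: "('p \<Rightarrow> nat) \<Rightarrow> ('p, 'c, 'v) cq \<Rightarrow> bool" where
  "wf_cq ar q = (wf_conj ar (snd q) \<and> set (fst q) \<subseteq> pvars_conj (snd q))"

text \<open>Dependency: the universally quantified variables are those of the body, each of which
  occurs in a predicate atom of the body; the head is a UCQ whose free variables are among them.\<close>
definition wf_dep :: "('p \<Rightarrow> nat) \<Rightarrow> ('p, 'c, 'v) dep \<Rightarrow> bool" where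
  "wf_dep ar d = (wf_conj ar (fst d) \<and> vars_conj (fst d) \<subseteq> pvars_conj (fst d) \<and>
      snd d \<noteq> [] \<and> (\<forall>q\<in>set (snd d). wf_cq ar q \<and> fv_cq q \<subseteq> vars_conj (fst d)))"

definition linear :: "('p, 'c, 'v) dep \<Rightarrow> bool" where
  "linear d = (card {l \<in> set (fst d). is_patom l} = 1)"

definition is_database :: "('p \<Rightarrow> nat) \<Rightarrow> ('p, 'c) db \<Rightarrow> bool" where
  "is_database ar D = (finite D \<and> (\<forall>(p, cs)\<in>D. length cs = ar p))"

definition safe_bucq :: "('p \<Rightarrow> nat) \<Rightarrow> ('p, 'c, 'v) ucq \<Rightarrow> bool" where
  "safe_bucq ar Q = (Q \<noteq> [] \<and> (\<forall>q\<in>set Q. wf_conj ar (snd q) \<and> fv_cq q = {} \<and>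
      vars_conj (snd q) \<subseteq> pvars_conj (snd q)))"

section \<open>Semantics of dependencies (database as interpretation, constants as standard names)\<close>

fun ev :: "('v \<Rightarrow> 'c) \<Rightarrow> ('c, 'v) trm \<Rightarrow> 'c" where
  "ev \<sigma> (Cst c) = c"
| "ev \<sigma> (Var v) = \<sigma> v"

fun sat_lit :: "('p, 'c) db \<Rightarrow> ('v \<Rightarrow> 'c) \<Rightarrow> ('p, 'c, 'v) lit \<Rightarrow> bool" where
  "sat_lit D \<sigma> (Atm Bot ts) = False"
| "sat_lit D \<sigma> (Atm (Pr p) ts) = ((p, map (ev \<sigma>) ts) \<in> D)"
| "sat_lit D \<sigma> (Neq s t) = (ev \<sigma> s \<noteq> ev \<sigma> t)"

definition sat_conj :: "('p, 'c) db \<Rightarrow> ('v \<Rightarrow> 'c) \<Rightarrow> ('p, 'c, 'v) conj \<Rightarrow> bool" where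
  "sat_conj D \<sigma> ls = (\<forall>l\<in>set ls. sat_lit D \<sigma> l)"

definition sat_cq :: "('p, 'c) db \<Rightarrow> ('v \<Rightarrow> 'c) \<Rightarrow> ('p, 'c, 'v) cq \<Rightarrow> bool" where
  "sat_cq D \<sigma> q = (\<exists>\<tau>. (\<forall>v. v \<notin> set (fst q) \<longrightarrow> \<tau> v = \<sigma> v) \<and> sat_conj D \<tau> (snd q))"

definition sat_ucq :: "('p, 'c) db \<Rightarrow> ('v \<Rightarrow> 'c) \<Rightarrow> ('p, 'c, 'v) ucq \<Rightarrow> bool" where
  "sat_ucq D \<sigma> Q = (\<exists>q\<in>set Q. sat_cq D \<sigma> q)"

text \<open>D satisfies the Boolean UCQ Q (no free variables, so the assignment is irrelevant).\<close>
definition holds_bucq :: "('p, 'c) db \<Rightarrow> ('p, 'c, 'v) ucq \<Rightarrow> bool" where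
  "holds_bucq D Q = sat_ucq D (\<lambda>_. undefined) Q"

definition sat_dep :: "('p, 'c) db \<Rightarrow> ('p, 'c, 'v) dep \<Rightarrow> bool" where
  "sat_dep D d = (\<forall>\<sigma>. sat_conj D \<sigma> (fst d) \<longrightarrow> sat_ucq D \<sigma> (snd d))"

definition consistent :: "('p, 'c, 'v) dep set \<Rightarrow> ('p, 'c) db \<Rightarrow> bool" where
  "consistent \<Sigma> D = (\<forall>d\<in>\<Sigma>. sat_dep D d)"

definition repair :: "('p, 'c, 'v) dep set \<Rightarrow> ('p, 'c) db \<Rightarrow> ('p, 'c) db \<Rightarrow> bool" where
  "repair \<Sigma> D R = (R \<subseteq> D \<and> consistent \<Sigma> R \<and>
      (\<forall>R'. R \<subset> R' \<and> R' \<subseteq> D \<longrightarrow> \<not> consistent \<Sigma> R'))"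

text \<open>AR / IAR entailment, parameterised by the satisfaction relation "R satisfies phi" (given as P R).\<close>
definition ar_entails :: "('p, 'c, 'v) dep set \<Rightarrow> ('p, 'c) db \<Rightarrow> (('p, 'c) db \<Rightarrow> bool) \<Rightarrow> bool" where
  "ar_entails \<Sigma> D P = (\<forall>R. repair \<Sigma> D R \<longrightarrow> P R)"

definition iar_entails :: "('p, 'c, 'v) dep set \<Rightarrow> ('p, 'c) db \<Rightarrow> (('p, 'c) db \<Rightarrow> bool) \<Rightarrow> bool" where
  "iar_entails \<Sigma> D P = P (\<Inter>{R. repair \<Sigma> D R})"

datatype ('p, 'c, 'v) fo =
    FAtom "'p pred" "('c, 'v) trm list"
  | FEq "('c, 'v) trm" "('c, 'v) trm"
  | FNeg "('p, 'c, 'v) fo"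
  | FConj "('p, 'c, 'v) fo" "('p, 'c, 'v) fo"
  | FDisj "('p, 'c, 'v) fo" "('p, 'c, 'v) fo"
  | FEx 'v "('p, 'c, 'v) fo"
  | FAll 'v "('p, 'c, 'v) fo"

fun fv_fo :: "('p, 'c, 'v) fo \<Rightarrow> 'v set" where
  "fv_fo (FAtom p ts) = (\<Union>t\<in>set ts. vars_trm t)"
| "fv_fo (FEq s t) = vars_trm s \<union> vars_trm t"
| "fv_fo (FNeg f) = fv_fo f"
| "fv_fo (FConj f g) = fv_fo f \<union> fv_fo g"
| "fv_fo (FDisj f g) = fv_fo f \<union> fv_fo g"
| "fv_fo (FEx v f) = fv_fo f - {v}"
| "fv_fo (FAll v f) = fv_fo f - {v}"

fun consts_trm :: "('c, 'v) trm \<Rightarrow> 'c set" where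
  "consts_trm (Cst c) = {c}"
| "consts_trm (Var v) = {}"

fun consts_fo :: "('p, 'c, 'v) fo \<Rightarrow> 'c set" where
  "consts_fo (FAtom p ts) = (\<Union>t\<in>set ts. consts_trm t)"
| "consts_fo (FEq s t) = consts_trm s \<union> consts_trm t"
| "consts_fo (FNeg f) = consts_fo f"
| "consts_fo (FConj f g) = consts_fo f \<union> consts_fo g"
| "consts_fo (FDisj f g) = consts_fo f \<union> consts_fo g"
| "consts_fo (FEx v f) = consts_fo f"
| "consts_fo (FAll v f) = consts_fo f"

fun wf_fo :: "('p \<Rightarrow> nat) \<Rightarrow> ('p, 'c, 'v) fo \<Rightarrow> bool" where
  "wf_fo ar (FAtom Bot ts) = (ts = [])"
| "wf_fo ar (FAtom (Pr p) ts) = (length ts = ar p)"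
| "wf_fo ar (FEq s t) = True"
| "wf_fo ar (FNeg f) = wf_fo ar f"
| "wf_fo ar (FConj f g) = (wf_fo ar f \<and> wf_fo ar g)"
| "wf_fo ar (FDisj f g) = (wf_fo ar f \<and> wf_fo ar g)"
| "wf_fo ar (FEx v f) = wf_fo ar f"
| "wf_fo ar (FAll v f) = wf_fo ar f"

definition sentence :: "('p, 'c, 'v) fo \<Rightarrow> bool" where
  "sentence f = (fv_fo f = {})"

text \<open>Evaluation of a formula in the interpretation given by database D with domain Delta
  (constants interpreted as themselves, i.e. standard names).\<close>
fun eval :: "'c set \<Rightarrow> ('p, 'c) db \<Rightarrow> ('v \<Rightarrow> 'c) \<Rightarrow> ('p, 'c, 'v) fo \<Rightarrow> bool" where
  "eval \<Delta> D \<sigma> (FAtom Bot ts) = False"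
| "eval \<Delta> D \<sigma> (FAtom (Pr p) ts) = ((p, map (ev \<sigma>) ts) \<in> D)"
| "eval \<Delta> D \<sigma> (FEq s t) = (ev \<sigma> s = ev \<sigma> t)"
| "eval \<Delta> D \<sigma> (FNeg f) = (\<not> eval \<Delta> D \<sigma> f)"
| "eval \<Delta> D \<sigma> (FConj f g) = (eval \<Delta> D \<sigma> f \<and> eval \<Delta> D \<sigma> g)"
| "eval \<Delta> D \<sigma> (FDisj f g) = (eval \<Delta> D \<sigma> f \<or> eval \<Delta> D \<sigma> g)"
| "eval \<Delta> D \<sigma> (FEx v f) = (\<exists>a\<in>\<Delta>. eval \<Delta> D (\<sigma>(v := a)) f)"
| "eval \<Delta> D \<sigma> (FAll v f) = (\<forall>a\<in>\<Delta>. eval \<Delta> D (\<sigma>(v := a)) f)"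

text \<open>Truth of a sentence in a database over domain Delta (the assignment is irrelevant for sentences).\<close>
definition eval_sent :: "'c set \<Rightarrow> ('p, 'c) db \<Rightarrow> ('p, 'c, 'v) fo \<Rightarrow> bool" where
  "eval_sent \<Delta> D f = eval \<Delta> D (\<lambda>_. undefined) f"

definition adom :: "('p, 'c) db \<Rightarrow> 'c set" where
  "adom D = (\<Union>(p, cs)\<in>D. set cs)"

definition holds :: "('p, 'c) db \<Rightarrow> ('p, 'c, 'v) fo \<Rightarrow> bool" where
  "holds D f = eval_sent UNIV D f"

definition domain_independent :: "('p, 'c, 'v) fo \<Rightarrow> bool" where
  "domain_independent f = (\<forall>(D :: ('p, 'c) db) \<Delta> \<Delta>'. finite D \<longrightarrow>
      adom D \<union> consts_fo f \<subseteq> \<Delta> \<longrightarrow> adom D \<union> consts_fo f \<subseteq> \<Delta>' \<longrightarrow>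
      eval_sent \<Delta> D f = eval_sent \<Delta>' D f)"

definition fact_fo :: "'p \<Rightarrow> 'c list \<Rightarrow> ('p, 'c, 'v) fo" where
  "fact_fo p cs = FAtom (Pr p) (map Cst cs)"

end

theory Submission
  imports Defs
begin

lemma sat_lit_mono: "D \<subseteq> D' \<Longrightarrow> sat_lit D \<sigma> l \<Longrightarrow> sat_lit D' \<sigma> l"
  by (induction D \<sigma> l rule: sat_lit.induct) auto

lemma sat_ucq_mono: "D \<subseteq> D' \<Longrightarrow> sat_ucq D \<sigma> Q \<Longrightarrow> sat_ucq D' \<sigma> Q"
  unfolding sat_ucq_def sat_cq_def sat_conj_def using sat_lit_mono by metis

lemma sat_lit_nonpatom: "\<not> is_patom l \<Longrightarrow> sat_lit D \<sigma> l = sat_lit D' \<sigma> l"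
  by (cases l) auto

lemma sat_dep_Union:
  assumes lin: "linear d" and all: "\<forall>R\<in>S. sat_dep R d"
  shows "sat_dep (\<Union>S) d"
  unfolding sat_dep_def
proof (intro allI impI)
  fix \<sigma> assume sc: "sat_conj (\<Union>S) \<sigma> (fst d)"
  have c1: "card {l \<in> set (fst d). is_patom l} = 1" using lin unfolding linear_def by simp
  obtain l0 where l0: "{l \<in> set (fst d). is_patom l} = {l0}"
    using card_1_singletonE[OF c1] by blast
  hence l0in: "l0 \<in> set (fst d)" "is_patom l0" by auto
  have others: "\<And>l. l \<in> set (fst d) \<Longrightarrow> l \<noteq> l0 \<Longrightarrow> \<not> is_patom l" using l0 by auto
  have s0: "sat_lit (\<Union>S) \<sigma> l0" using sc l0in(1) unfolding sat_conj_def by blast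
  obtain R where R: "R \<in> S" "sat_lit R \<sigma> l0"
  proof (cases l0)
    case (Atm P ts)
    then show ?thesis
    proof (cases P)
      case Bot then show ?thesis using s0 Atm by simp
    next
      case (Pr p)
      then have "(p, map (ev \<sigma>) ts) \<in> \<Union>S" using s0 Atm by simp
      then obtain R where "R \<in> S" "(p, map (ev \<sigma>) ts) \<in> R" by blast
      then show ?thesis by (intro that[of R]) (simp_all add: Pr Atm)
    qed
  next
    case (Neq s t) then show ?thesis using l0in by simp
  qed
  have "sat_conj R \<sigma> (fst d)"
    unfolding sat_conj_def
  proof
    fix l assume l: "l \<in> set (fst d)"
    show "sat_lit R \<sigma> l"
    proof (cases "l = l0")
      case True then show ?thesis using R by simp
    next
      case False
      then have "\<not> is_patom l" using others l by auto
      moreover have "sat_lit (\<Union>S) \<sigma> l" using sc l unfolding sat_conj_def by auto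
      ultimately show ?thesis using sat_lit_nonpatom[of l "\<Union>S" \<sigma> R] by simp
    qed
  qed
  moreover have "sat_dep R d" using all R(1) by blast
  ultimately have "sat_ucq R \<sigma> (snd d)" unfolding sat_dep_def by blast
  moreover have "R \<subseteq> \<Union>S" using R(1) by blast
  ultimately show "sat_ucq (\<Union>S) \<sigma> (snd d)" using sat_ucq_mono by blast
qed

lemma linear_ar_iar:
  assumes lin: "\<forall>d\<in>\<Sigma>. linear d"
  shows "ar_entails \<Sigma> D P = iar_entails \<Sigma> D P"
proof -
  define U where "U = \<Union>{R. R \<subseteq> D \<and> consistent \<Sigma> R}"
  have cU: "consistent \<Sigma> U"
    unfolding consistent_def
  proof
    fix d assume d: "d \<in> \<Sigma>"
    have "\<forall>R\<in>{R. R \<subseteq> D \<and> consistent \<Sigma> R}. sat_dep R d"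
      using d unfolding consistent_def by blast
    then show "sat_dep U d" unfolding U_def using sat_dep_Union[of d] lin d by blast
  qed
  have sub: "U \<subseteq> D" unfolding U_def by (rule Union_least) blast
  have big: "R' \<subseteq> D \<Longrightarrow> consistent \<Sigma> R' \<Longrightarrow> R' \<subseteq> U" for R'
    unfolding U_def by (rule Union_upper) blast
  have rU: "repair \<Sigma> D U"
    unfolding repair_def
  proof (intro conjI allI impI sub cU)
    fix R' assume "U \<subset> R' \<and> R' \<subseteq> D"
    then show "\<not> consistent \<Sigma> R'" using big by blast
  qed
  have uniq: "R = U" if r: "repair \<Sigma> D R" for R
  proof -
    have "R \<subseteq> D" "consistent \<Sigma> R" using r unfolding repair_def by simp_all
    then have "R \<subseteq> U" using big by simp
    moreover have "\<not> (R \<subset> U)" using r sub cU unfolding repair_def by blast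
    ultimately show "R = U" by simp
  qed
  have e: "{R. repair \<Sigma> D R} = {U}" using rU uniq by blast
  have "ar_entails \<Sigma> D P = P U"
    unfolding ar_entails_def using rU uniq by metis
  moreover have "iar_entails \<Sigma> D P = P U"
    unfolding iar_entails_def e by simp
  ultimately show ?thesis by simp
qed

lemma holds_fact: "holds R (fact_fo p cs :: ('p, 'c, 'w) fo) = ((p, cs) \<in> R)"
proof -
  have "map (ev (\<lambda>_. undefined :: 'c)) (map Cst cs :: ('c,'w) trm list) = cs"
    by (induction cs) auto
  then show ?thesis unfolding holds_def eval_sent_def fact_fo_def by simp
qed

theorem proposition1:
  fixes ar :: "'p \<Rightarrow> nat"
    and \<Sigma> :: "('p, 'c, 'v) dep set"
    and D :: "('p, 'c) db"
  assumes "finite \<Sigma>"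
    and "\<forall>d\<in>\<Sigma>. wf_dep ar d"
    and "is_database ar D"
  shows "(\<forall>p cs. length cs = ar p \<longrightarrow>
            (ar_entails \<Sigma> D (\<lambda>R. holds R (fact_fo p cs :: ('p, 'c, 'w) fo)) \<longleftrightarrow>
             iar_entails \<Sigma> D (\<lambda>R. holds R (fact_fo p cs :: ('p, 'c, 'w) fo))))
       \<and> ((\<forall>d\<in>\<Sigma>. linear d) \<longrightarrow>
            (\<forall>\<phi> :: ('p, 'c, 'w) fo. wf_fo ar \<phi> \<and> sentence \<phi> \<and> domain_independent \<phi> \<longrightarrow>
               (ar_entails \<Sigma> D (\<lambda>R. holds R \<phi>) \<longleftrightarrow> iar_entails \<Sigma> D (\<lambda>R. holds R \<phi>)))
          \<and> (\<forall>Q :: ('p, 'c, 'w) ucq. safe_bucq ar Q \<longrightarrow>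
               (ar_entails \<Sigma> D (\<lambda>R. holds_bucq R Q) \<longleftrightarrow> iar_entails \<Sigma> D (\<lambda>R. holds_bucq R Q))))"
proof (intro conjI allI impI)
  fix p cs
  show "ar_entails \<Sigma> D (\<lambda>R. holds R (fact_fo p cs :: ('p, 'c, 'w) fo)) \<longleftrightarrow>
             iar_entails \<Sigma> D (\<lambda>R. holds R (fact_fo p cs :: ('p, 'c, 'w) fo))"
    unfolding ar_entails_def iar_entails_def holds_fact by blast
next
  fix \<phi> :: "('p, 'c, 'w) fo"
  assume "\<forall>d\<in>\<Sigma>. linear d"
  then show "ar_entails \<Sigma> D (\<lambda>R. holds R \<phi>) \<longleftrightarrow> iar_entails \<Sigma> D (\<lambda>R. holds R \<phi>)"
    by (rule linear_ar_iar)
next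
  fix Q :: "('p, 'c, 'w) ucq"
  assume "\<forall>d\<in>\<Sigma>. linear d"
  then show "ar_entails \<Sigma> D (\<lambda>R. holds_bucq R Q) \<longleftrightarrow> iar_entails \<Sigma> D (\<lambda>R. holds_bucq R Q)"
    by (rule linear_ar_iar)
qed

end
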